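(* Let $n \ge 3$. For $n$-simplices in $\mathbb{E}^n$ with vertices labeled $1,\dots,n+1$, let $E = (l_e)_e$ be the vector of the $n(n+1)/2$ edge lengths (indexed by the $2$-element subsets $e$ of $\{1,\dots,n+1\}$) and let $F = (V_S)_S$ be the vector of the $n(n+1)/2$ $(n-2)$-dimensional volumes of the $(n-2)$-dimensional faces (indexed by the $(n-1)$-element subsets $S$ of $\{1,\dots,n+1\}$), regarded as a function of $E$. Let $p_1$ be the edge-length vector of the regular simplex with all edge lengths equal to $1$, and let $J(p_1) = \partial F/\partial E$ be the Jacobian matrix at $p_1$. Let $M$ be the matrix with rows indexed by the $(n-1)$-subsets $S$ and columns indexed by the $2$-subsets $e$, with $M_{S,e} = 1$ if $e \subset S$ (i.e. the edge $e$ is an edge of the face $S$) and $M_{S,e} = 0$ otherwise. Then there is a constant $c \neq 0$ such that $J(p_1) = c\,M$.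
   Context: An $n$-simplex in $\mathbb{E}^n$ is determined up to congruence by its edge lengths, so the face volumes are functions of the edge lengths near $p_1$. *)

theory Defs
  imports "HOL-Analysis.Analysis"
begin

text \<open>Vertices are labelled 1..n+1; a configuration is a map from labels to points of
  Euclidean space real^'n, where n = CARD('n).\<close>

definition simplex_edges :: "nat \<Rightarrow> nat set set" where
  "simplex_edges n = {e. e \<subseteq> {1..n+1} \<and> card e = 2}"

definition simplex_faces :: "nat \<Rightarrow> nat set set" where
  "simplex_faces n = {S. S \<subseteq> {1..n+1} \<and> card S = n - 1}"

definition is_simplex :: "(nat \<Rightarrow> real^'n) \<Rightarrow> bool" where
  "is_simplex x \<longleftrightarrow> inj_on x {1..CARD('n)+1} \<and>
     \<not> affine_dependent (x ` {1..CARD('n)+1})"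

definition edge_lengths :: "(nat \<Rightarrow> real^'n) \<Rightarrow> nat set \<Rightarrow> real" where
  "edge_lengths x e =
     (if e \<in> simplex_edges CARD('n) then dist (x (Min e)) (x (Max e)) else 0)"

text \<open>Gram determinant of the edge vectors of the face S emanating from its smallest vertex
  (Leibniz expansion of the determinant over the index set S - {Min S}).\<close>
definition face_gram_det :: "(nat \<Rightarrow> 'a::real_inner) \<Rightarrow> nat set \<Rightarrow> real" where
  "face_gram_det x S =
     (let a = Min S; T = S - {a} in
      \<Sum>p | p permutes T. of_int (sign p) *
         (\<Prod>i\<in>T. (x i - x a) \<bullet> (x (p i) - x a)))"

definition face_volume :: "(nat \<Rightarrow> 'a::real_inner) \<Rightarrow> nat set \<Rightarrow> real" where
  "face_volume x S = sqrt (face_gram_det x S) / fact (card S - 1)"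

text \<open>F as a function of the edge-length vector E: the (n-2)-face volumes of an n-simplex
  in E^n with edge lengths E (well defined up to congruence; arbitrary if E is not realisable).\<close>
definition face_volumes_of_edges :: "'n::finite itself \<Rightarrow> (nat set \<Rightarrow> real) \<Rightarrow> nat set \<Rightarrow> real" where
  "face_volumes_of_edges _ E S =
     face_volume (SOME x :: nat \<Rightarrow> real^'n. is_simplex x \<and> edge_lengths x = E) S"

definition regular_edges :: "nat \<Rightarrow> nat set \<Rightarrow> real" where
  "regular_edges n e = (if e \<in> simplex_edges n then 1 else 0)"

definition edge_unit :: "nat set \<Rightarrow> nat set \<Rightarrow> real" where
  "edge_unit e = (\<lambda>e'. if e' = e then 1 else 0)"

definition incidence :: "nat set \<Rightarrow> nat set \<Rightarrow> real" where
  "incidence S e = (if e \<subseteq> S then 1 else 0)"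

end

theory Submission
  imports Defs
begin


definition LD :: "nat set \<Rightarrow> (nat \<Rightarrow> nat \<Rightarrow> real) \<Rightarrow> real" where
  "LD T g = (\<Sum>p | p permutes T. of_int (sign p) * (\<Prod>i\<in>T. g i (p i)))"

definition Lam :: "nat set \<Rightarrow> (nat \<Rightarrow> nat \<Rightarrow> real) \<Rightarrow> nat \<Rightarrow> (nat \<Rightarrow> real) \<Rightarrow> real" where
  "Lam T g k r = (\<Sum>p | p permutes T. of_int (sign p) * (r (p k) * (\<Prod>i\<in>T-{k}. g i (p i))))"

lemma LD_cong:
  assumes "\<And>i j. i \<in> T \<Longrightarrow> j \<in> T \<Longrightarrow> g i j = g' i j"
  shows "LD T g = LD T g'"
  unfolding LD_def
  by (intro sum.cong refl arg_cong2[where f="(*)"] prod.cong) (auto intro!: assms simp: permutes_in_image)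

lemma Lam_cong:
  assumes "k \<in> T" "\<And>j. j \<in> T \<Longrightarrow> r j = r' j"
  shows "Lam T g k r = Lam T g k r'"
  unfolding Lam_def
  by (intro sum.cong refl arg_cong2[where f="(*)"]) (auto intro!: assms simp: permutes_in_image)

lemma Lam_cmult: "Lam T g k (\<lambda>j. c * r j) = c * Lam T g k r"
  unfolding Lam_def sum_distrib_left by (intro sum.cong refl) (simp add: algebra_simps)

lemma Lam_add: "Lam T g k (\<lambda>j. r j + r' j) = Lam T g k r + Lam T g k r'"
  unfolding Lam_def sum.distrib[symmetric] by (intro sum.cong refl) (simp add: algebra_simps)

lemma Lam_sum:
  assumes "finite A"
  shows "Lam T g k (\<lambda>j. \<Sum>l\<in>A. f l j) = (\<Sum>l\<in>A. Lam T g k (f l))"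
  using assms by (induction A rule: finite_induct) (auto simp: Lam_add Lam_def)

lemma Lam_zero: "Lam T g k (\<lambda>j. 0) = 0"
  using Lam_cmult[of T g k 0 "\<lambda>_. 0"] by simp

lemma Lam_self:
  assumes "finite T" "k \<in> T"
  shows "Lam T g k (g k) = LD T g"
  unfolding Lam_def LD_def
  by (intro sum.cong refl arg_cong2[where f="(*)"]) (simp add: prod.remove[OF assms])

lemma Lam_alt:
  assumes T: "finite T" and k: "k \<in> T" and l: "l \<in> T" and kl: "k \<noteq> l"
  shows "Lam T g k (g l) = 0"
proof -
  let ?t = "Transposition.transpose k l"
  let ?f = "\<lambda>p. of_int (sign p) * (g l (p k) * (\<Prod>i\<in>T-{k}. g i (p i)))"
  have tp: "?t permutes T" using permutes_swap_id[OF k l] .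
  have "Lam T g k (g l) = sum ?f {p. p permutes T}" unfolding Lam_def by simp
  also have "\<dots> = sum (\<lambda>p. ?f (p \<circ> ?t)) {p. p permutes T}"
    by (rule sum_permutations_compose_right[OF tp])
  also have "\<dots> = sum (\<lambda>p. - ?f p) {p. p permutes T}"
  proof (rule sum.cong[OF refl])
    fix p assume "p \<in> {p. p permutes T}"
    hence p: "p permutes T" by simp
    have sc: "sign (p \<circ> ?t) = - sign p"
      using sign_compose[OF permutes_imp_permutation[OF T p] permutation_swap_id, of k l]
        sign_swap_id[of k l] kl by simp
    have e1: "T - {k} = insert l (T - {k, l})" using l kl by auto
    have fin: "finite (T - {k,l})" using T by simp
    have nl: "l \<notin> T - {k,l}" by simp
    have "(\<Prod>i\<in>T-{k}. g i ((p \<circ> ?t) i)) = g l (p k) * (\<Prod>i\<in>T-{k,l}. g i ((p \<circ> ?t) i))"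
      unfolding e1 prod.insert[OF fin nl] by simp
    also have "(\<Prod>i\<in>T-{k,l}. g i ((p \<circ> ?t) i)) = (\<Prod>i\<in>T-{k,l}. g i (p i))"
      by (intro prod.cong refl) simp
    finally have A: "(\<Prod>i\<in>T-{k}. g i ((p \<circ> ?t) i)) = g l (p k) * (\<Prod>i\<in>T-{k,l}. g i (p i))" .
    have B: "(\<Prod>i\<in>T-{k}. g i (p i)) = g l (p l) * (\<Prod>i\<in>T-{k,l}. g i (p i))"
      unfolding e1 prod.insert[OF fin nl] ..
    have C: "(p \<circ> ?t) k = p l" by simp
    show "?f (p \<circ> ?t) = - ?f p"
      unfolding A B C sc by simp
  qed
  also have "\<dots> = - Lam T g k (g l)" unfolding Lam_def by (simp add: sum_negf)
  finally show ?thesis by simp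
qed

lemma Lam_delta:
  assumes T: "finite T" and k: "k \<in> T"
  shows "Lam T g k (\<lambda>j. if j = k then 1 else 0) = LD (T - {k}) g"
proof -
  have eq: "{p. p permutes T \<and> p k = k} = {p. p permutes (T - {k})}"
  proof (intro set_eqI iffI)
    fix p assume "p \<in> {p. p permutes T \<and> p k = k}"
    hence p: "p permutes T" "p k = k" by auto
    have "p permutes T - {k}"
      using p unfolding permutes_def by (metis Diff_iff singletonD)
    thus "p \<in> {p. p permutes (T - {k})}" by simp
  next
    fix p assume "p \<in> {p. p permutes (T - {k})}"
    hence p: "p permutes T - {k}" by simp
    have "p permutes T" using permutes_subset[OF p] by blast
    moreover have "p k = k" using p unfolding permutes_def by blast
    ultimately show "p \<in> {p. p permutes T \<and> p k = k}" by simp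
  qed
  have "Lam T g k (\<lambda>j. if j = k then 1 else 0) =
     (\<Sum>p\<in>{p. p permutes T}. if p k = k then of_int (sign p) * (\<Prod>i\<in>T-{k}. g i (p i)) else 0)"
    unfolding Lam_def by (intro sum.cong) auto
  also have "\<dots> = (\<Sum>p\<in>{p. p permutes T \<and> p k = k}. of_int (sign p) * (\<Prod>i\<in>T-{k}. g i (p i)))"
    by (subst sum.inter_filter[symmetric]) (auto simp: finite_permutations[OF T] intro!: sum.cong)
  also have "\<dots> = LD (T - {k}) g" unfolding eq LD_def ..
  finally show ?thesis .
qed



definition g0 :: "nat \<Rightarrow> nat \<Rightarrow> real" where
  "g0 i j = (if i = j then 1 else 1/2)"

definition dl :: "nat \<Rightarrow> nat \<Rightarrow> real" where
  "dl l j = (if j = l then 1 else 0)"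

lemma g0_row: "g0 l = (\<lambda>j. 1/2 * 1 + 1/2 * dl l j)"
  by (auto simp: g0_def dl_def fun_eq_iff)

lemma Lam_g0:
  assumes T: "finite T" and k: "k \<in> T"
  shows "Lam T g0 k (\<lambda>_. 1) = 2 * LD T g0 / (card T + 1)"
    and "\<And>l. l \<in> T \<Longrightarrow> l \<noteq> k \<Longrightarrow> Lam T g0 k (dl l) = - 2 * LD T g0 / (card T + 1)"
    and "Lam T g0 k (dl k) = 2 * card T * LD T g0 / (card T + 1)"
proof -
  define R where "R = Lam T g0 k (\<lambda>_. 1)"
  have lin: "Lam T g0 k (g0 l) = R/2 + Lam T g0 k (dl l) / 2" for l
    unfolding g0_row Lam_add Lam_cmult R_def by simp
  have off: "Lam T g0 k (dl l) = - R" if "l \<in> T" "l \<noteq> k" for l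
    using lin[of l] Lam_alt[OF T k that(1)] that by auto
  have diag: "LD T g0 = R/2 + Lam T g0 k (dl k) / 2"
    using lin[of k] Lam_self[OF T k] by simp
  have "R = Lam T g0 k (\<lambda>j. \<Sum>l\<in>T. dl l j)"
    unfolding R_def by (rule Lam_cong[OF k]) (simp add: dl_def T)
  also have "\<dots> = (\<Sum>l\<in>T. Lam T g0 k (dl l))" by (rule Lam_sum[OF T])
  also have "\<dots> = Lam T g0 k (dl k) + (\<Sum>l\<in>T-{k}. Lam T g0 k (dl l))"
    by (rule sum.remove[OF T k])
  also have "(\<Sum>l\<in>T-{k}. Lam T g0 k (dl l)) = (\<Sum>l\<in>T-{k}. - R)"
    by (intro sum.cong refl off) auto
  also have "\<dots> = - (real (card T) - 1) * R"
  proof -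
    have "card T \<ge> 1" using T k by (metis One_nat_def Suc_leI card_gt_0_iff empty_iff)
    thus ?thesis using T k by (simp add: card_Diff_singleton of_nat_diff algebra_simps)
  qed
  finally have "R = Lam T g0 k (dl k) + - (real (card T) - 1) * R" .
  hence ck: "Lam T g0 k (dl k) = card T * R" by (simp add: algebra_simps)
  have RR: "R = 2 * LD T g0 / (card T + 1)"
    using diag ck by (simp add: field_simps)
  show "Lam T g0 k (\<lambda>_. 1) = 2 * LD T g0 / (card T + 1)" using RR R_def by simp
  show "\<And>l. l \<in> T \<Longrightarrow> l \<noteq> k \<Longrightarrow> Lam T g0 k (dl l) = - 2 * LD T g0 / (card T + 1)"
    using off RR by simp
  show "Lam T g0 k (dl k) = 2 * card T * LD T g0 / (card T + 1)"
    using ck RR by simp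
qed

lemma LD_g0: "finite T \<Longrightarrow> card T = m \<Longrightarrow> LD T g0 = (m + 1) / 2 ^ m"
proof (induction m arbitrary: T)
  case 0
  hence "T = {}" by simp
  thus ?case by (simp add: LD_def)
next
  case (Suc m)
  then obtain k where k: "k \<in> T" by (metis card.empty ex_in_conv nat.distinct(1))
  have "LD (T - {k}) g0 = (real m+1)/2^m"
    using Suc.prems k by (intro Suc.IH) auto
  moreover have "LD (T - {k}) g0 = 2 * card T * LD T g0 / (card T + 1)"
  proof -
    have "dl k = (\<lambda>j. if j = k then 1 else 0)" by (simp add: dl_def fun_eq_iff)
    thus ?thesis using Lam_g0(3)[OF Suc.prems(1) k] Lam_delta[OF Suc.prems(1) k] by simp
  qed
  ultimately have "(real m+1)/2^m = 2 * (real m + 1) * LD T g0 / (real m + 2)"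
    using Suc.prems(2) by (simp add: algebra_simps)
  hence "(real m+1)/2^m * (real m + 2) = 2 * (real m + 1) * LD T g0"
    by (simp add: field_simps)
  hence "(real m + 1) * ((real m + 2) / 2^m) = (real m + 1) * (2 * LD T g0)"
    by (simp add: field_simps)
  hence "(real m + 2) / 2^m = 2 * LD T g0"
    by (metis mult_left_cancel add_nonneg_pos of_nat_0_le_iff zero_less_one less_irrefl)
  thus ?case by (simp add: field_simps)
qed

lemma LD_deriv:
  assumes T: "finite T" and phi: "(\<phi> has_real_derivative \<phi>') (at 0)" and phi0: "\<phi> 0 = 0"
  shows "((\<lambda>t. LD T (\<lambda>i j. a i j + \<phi> t * b i j)) has_real_derivative
            (\<phi>' * (\<Sum>k\<in>T. Lam T a k (b k)))) (at 0)"
proof -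
  have P: "((\<lambda>t. \<Prod>i\<in>T. a i (p i) + \<phi> t * b i (p i)) has_real_derivative
        (\<Sum>k\<in>T. \<phi>' * b k (p k) * (\<Prod>i\<in>T-{k}. a i (p i)))) (at 0)" for p
  proof -
    have d: "((\<lambda>t. a i (p i) + \<phi> t * b i (p i)) has_derivative (\<lambda>y. y * (\<phi>' * b i (p i)))) (at 0)" for i
    proof -
      have "((\<lambda>t. a i (p i) + \<phi> t * b i (p i)) has_real_derivative (\<phi>' * b i (p i))) (at 0)"
        by (auto intro!: derivative_eq_intros phi)
      thus ?thesis by (simp add: has_field_derivative_def mult.commute[of _ "\<phi>' * b i (p i)"])
    qed
    have "((\<lambda>t. \<Prod>i\<in>T. a i (p i) + \<phi> t * b i (p i)) has_derivative
       (\<lambda>y. \<Sum>i\<in>T. y * (\<phi>' * b i (p i)) * (\<Prod>j\<in>T - {i}. a j (p j) + \<phi> 0 * b j (p j)))) (at 0)"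
      by (rule has_derivative_prod) (rule d)
    hence "((\<lambda>t. \<Prod>i\<in>T. a i (p i) + \<phi> t * b i (p i)) has_derivative
       (\<lambda>y. y * (\<Sum>k\<in>T. \<phi>' * b k (p k) * (\<Prod>i\<in>T-{k}. a i (p i))))) (at 0)"
      by (simp add: phi0 sum_distrib_left mult.assoc)
    moreover have "(\<lambda>y. y * (\<Sum>k\<in>T. \<phi>' * b k (p k) * (\<Prod>i\<in>T-{k}. a i (p i)))) =
       (*) (\<Sum>k\<in>T. \<phi>' * b k (p k) * (\<Prod>i\<in>T-{k}. a i (p i)))" by (rule ext) simp
    ultimately show ?thesis by (simp add: has_field_derivative_def)
  qed
  have "((\<lambda>t. LD T (\<lambda>i j. a i j + \<phi> t * b i j)) has_real_derivative
     (\<Sum>p | p permutes T. of_int (sign p) * (\<Sum>k\<in>T. \<phi>' * b k (p k) * (\<Prod>i\<in>T-{k}. a i (p i))))) (at 0)"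
    unfolding LD_def by (intro DERIV_sum DERIV_cmult P)
  also have "(\<Sum>p | p permutes T. of_int (sign p) * (\<Sum>k\<in>T. \<phi>' * b k (p k) * (\<Prod>i\<in>T-{k}. a i (p i))))
     = \<phi>' * (\<Sum>k\<in>T. Lam T a k (b k))"
    unfolding Lam_def sum_distrib_left
    by (subst sum.swap) (intro sum.cong refl, simp add: algebra_simps)
  finally show ?thesis .
qed



definition gg :: "(nat set \<Rightarrow> real) \<Rightarrow> nat \<Rightarrow> nat \<Rightarrow> nat \<Rightarrow> real" where
  "gg E a i j = (if i = j then (E {a,i})^2 else ((E {a,i})^2 + (E {a,j})^2 - (E {i,j})^2) / 2)"

lemma el_pair:
  fixes x :: "nat \<Rightarrow> real^'n::finite"
  assumes "u \<noteq> v" "u \<in> {1..CARD('n)+1}" "v \<in> {1..CARD('n)+1}"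
  shows "edge_lengths x {u,v} = dist (x u) (x v)"
proof -
  have "{u,v} \<in> simplex_edges CARD('n)" using assms by (auto simp: simplex_edges_def)
  moreover have "Min {u,v} = min u v" "Max {u,v} = max u v" by auto
  ultimately show ?thesis unfolding edge_lengths_def
    by (cases "u < v") (auto simp: min_def max_def dist_commute)
qed

lemma inner_gg:
  fixes x :: "nat \<Rightarrow> real^'n::finite"
  assumes "a \<in> {1..CARD('n)+1}" "i \<in> {1..CARD('n)+1}" "j \<in> {1..CARD('n)+1}" "i \<noteq> a" "j \<noteq> a"
  shows "(x i - x a) \<bullet> (x j - x a) = gg (edge_lengths x) a i j"
proof (cases "i = j")
  case True
  thus ?thesis using assms el_pair[of a i x]
    by (simp add: gg_def dist_norm power2_norm_eq_inner inner_diff_left inner_diff_right inner_commute)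
next
  case False
  have "(x i - x a) \<bullet> (x j - x a) =
      ((norm (x a - x i))^2 + (norm (x a - x j))^2 - (norm (x i - x j))^2) / 2"
    by (simp add: power2_norm_eq_inner inner_diff_left inner_diff_right inner_commute algebra_simps)
  thus ?thesis using assms False el_pair[of a i x] el_pair[of a j x] el_pair[of i j x]
    by (simp add: gg_def dist_norm)
qed

lemma fgd:
  fixes x :: "nat \<Rightarrow> real^'n::finite"
  assumes S: "S \<subseteq> {1..CARD('n)+1}" "S \<noteq> {}"
  shows "face_gram_det x S = LD (S - {Min S}) (gg (edge_lengths x) (Min S))"
proof -
  have fin: "finite S" using S finite_subset by blast
  have a: "Min S \<in> S" using Min_in[OF fin S(2)] .
  show ?thesis
    unfolding face_gram_det_def Let_def LD_def
  proof (intro sum.cong refl arg_cong2[where f="(*)"] prod.cong)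
    fix p i assume p: "p \<in> {p. p permutes S - {Min S}}" and i: "i \<in> S - {Min S}"
    have pi: "p i \<in> S - {Min S}" using p i permutes_in_image[of p "S - {Min S}" i] by simp
    show "(x i - x (Min S)) \<bullet> (x (p i) - x (Min S)) = gg (edge_lengths x) (Min S) i (p i)"
      using i pi a S(1) by (intro inner_gg) auto
  qed
qed

lemma fve:
  assumes ex: "\<exists>x::nat \<Rightarrow> real^'n::finite. is_simplex x \<and> edge_lengths x = E"
    and S: "S \<subseteq> {1..CARD('n)+1}" "S \<noteq> {}"
  shows "face_volumes_of_edges TYPE('n) E S = sqrt (LD (S - {Min S}) (gg E (Min S))) / fact (card S - 1)"
proof -
  define x where "x = (SOME x :: nat \<Rightarrow> real^'n. is_simplex x \<and> edge_lengths x = E)"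
  have "is_simplex x \<and> edge_lengths x = E" unfolding x_def by (rule someI_ex[OF ex])
  thus ?thesis unfolding face_volumes_of_edges_def x_def[symmetric] face_volume_def
    using fgd[OF S, of x] by simp
qed



definition Et :: "nat \<Rightarrow> nat set \<Rightarrow> real \<Rightarrow> nat set \<Rightarrow> real" where
  "Et n e t = (\<lambda>e'. regular_edges n e' + t * edge_unit e e')"

definition ind :: "bool \<Rightarrow> real" where "ind P = (if P then 1 else 0)"

definition HH :: "nat set \<Rightarrow> nat \<Rightarrow> nat \<Rightarrow> nat \<Rightarrow> real" where
  "HH e a i j = (if i = j then ind ({a,i} = e) else (ind ({a,i}=e) + ind ({a,j}=e) - ind ({i,j}=e))/2)"

lemma Et_pair:
  assumes "u \<noteq> v" "u \<in> {1..n+1}" "v \<in> {1..n+1}"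
  shows "Et n e t {u,v} = 1 + t * ind ({u,v} = e)"
proof -
  have "{u,v} \<in> simplex_edges n" using assms by (auto simp: simplex_edges_def)
  thus ?thesis by (auto simp: Et_def regular_edges_def edge_unit_def ind_def)
qed

lemma sq_ind: "(1 + t * ind P)^2 = 1 + (2*t + t^2) * ind P"
  by (simp add: ind_def power2_eq_square algebra_simps)

lemma gg_Et:
  assumes "a \<in> {1..n+1}" "i \<in> {1..n+1}" "j \<in> {1..n+1}" "i \<noteq> a" "j \<noteq> a"
  shows "gg (Et n e t) a i j = g0 i j + (2*t + t^2) * HH e a i j"
proof (cases "i = j")
  case True
  thus ?thesis using assms Et_pair[of a i n e t]
    by (simp add: gg_def g0_def HH_def sq_ind)
next
  case False
  thus ?thesis using assms Et_pair[of a i n e t] Et_pair[of a j n e t] Et_pair[of i j n e t]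
    by (simp add: gg_def g0_def HH_def sq_ind algebra_simps add_divide_distrib diff_divide_distrib)
qed

lemma sum_HH:
  assumes S: "S \<in> simplex_faces n" and n: "n \<ge> 3" and e: "e \<in> simplex_edges n"
  defines "a \<equiv> Min S" and "T \<equiv> S - {Min S}"
  shows "(\<Sum>k\<in>T. Lam T g0 k (HH e a k)) = (if e \<subseteq> S then 2 * LD T g0 / (card T + 1) else 0)"
proof -
  have Ssub: "S \<subseteq> {1..n+1}" and cS: "card S = n - 1" using S by (auto simp: simplex_faces_def)
  have finS: "finite S" using Ssub finite_subset by blast
  have Sne: "S \<noteq> {}" using cS n by auto
  have aS: "a \<in> S" unfolding a_def using Min_in[OF finS Sne] .
  have finT: "finite T" unfolding T_def using finS by simp
  have aT: "a \<notin> T" unfolding T_def a_def by simp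
  have TS: "T \<subseteq> S" unfolding T_def by auto
  have cT: "card T = n - 2" unfolding T_def using cS finS Sne Min_in by (simp add: card_Diff_singleton)
  obtain u v where e2: "e = {u,v}" "u \<noteq> v" using e by (auto simp: simplex_edges_def card_2_iff)
  show ?thesis
  proof (cases "e \<subseteq> S")
    case False
    have "Lam T g0 k (HH e a k) = 0" if k: "k \<in> T" for k
    proof -
      have "Lam T g0 k (HH e a k) = Lam T g0 k (\<lambda>_. 0)"
      proof (rule Lam_cong[OF k])
        fix j assume j: "j \<in> T"
        have "{a,k} \<noteq> e" "{a,j} \<noteq> e" "{k,j} \<noteq> e" using False aS k j TS by auto
        thus "HH e a k j = 0" by (simp add: HH_def ind_def)
      qed
      thus ?thesis by (simp add: Lam_zero)
    qed
    thus ?thesis using False by simp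
  next
    case True
    let ?L = "LD T g0" let ?m = "card T"
    show ?thesis
    proof (cases "a \<in> e")
      case True
      then obtain k0 where k0: "e = {a,k0}" "k0 \<noteq> a" using e2 by auto
      have k0T: "k0 \<in> T" using k0 \<open>e \<subseteq> S\<close> unfolding T_def a_def by auto
      have L1: "Lam T g0 k0 (HH e a k0) = ?L"
      proof -
        have "Lam T g0 k0 (HH e a k0) = Lam T g0 k0 (g0 k0)"
        proof (rule Lam_cong[OF k0T])
          fix j assume j: "j \<in> T"
          show "HH e a k0 j = g0 k0 j"
            using j aT k0 by (cases "j = k0") (auto simp: HH_def ind_def g0_def doubleton_eq_iff)
        qed
        thus ?thesis using Lam_self[OF finT k0T] by simp
      qed
      have L2: "Lam T g0 i (HH e a i) = - ?L / (?m + 1)" if i: "i \<in> T - {k0}" for i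
      proof -
        have "Lam T g0 i (HH e a i) = Lam T g0 i (\<lambda>j. 1/2 * dl k0 j)"
        proof (rule Lam_cong)
          show "i \<in> T" using i by simp
          fix j assume j: "j \<in> T"
          show "HH e a i j = 1/2 * dl k0 j"
            using i j aT k0 by (cases "j = k0"; cases "i = j") (auto simp: HH_def ind_def dl_def doubleton_eq_iff)
        qed
        also have "\<dots> = 1/2 * (- 2 * ?L / (?m + 1))"
          unfolding Lam_cmult using Lam_g0(2)[OF finT _ k0T, of i] i by simp
        finally show ?thesis by simp
      qed
      have m1: "?m \<ge> 1" using k0T finT by (metis One_nat_def Suc_leI card_gt_0_iff empty_iff)
      have "(\<Sum>k\<in>T. Lam T g0 k (HH e a k)) = Lam T g0 k0 (HH e a k0) + (\<Sum>k\<in>T-{k0}. Lam T g0 k (HH e a k))"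
        by (rule sum.remove[OF finT k0T])
      also have "\<dots> = ?L + (\<Sum>k\<in>T-{k0}. - ?L / (?m + 1))"
        using L1 L2 by simp
      also have "\<dots> = ?L - (real ?m - 1) * ?L / (?m + 1)"
        using finT k0T m1 by (simp add: card_Diff_singleton of_nat_diff)
      also have "\<dots> = 2 * ?L / (?m + 1)"
        by (simp add: field_simps)
      finally show ?thesis using \<open>e \<subseteq> S\<close> by simp
    next
      case False
      have uT: "u \<in> T" and vT: "v \<in> T" using e2 False \<open>e \<subseteq> S\<close> unfolding T_def a_def by auto
      have L: "Lam T g0 k (HH e a k) = ?L / (?m + 1)" if "k \<in> T" "l \<in> T" "k \<noteq> l" "e = {k,l}" for k l
      proof -
        have "Lam T g0 k (HH e a k) = Lam T g0 k (\<lambda>j. -1/2 * dl l j)"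
        proof (rule Lam_cong[OF that(1)])
          fix j assume j: "j \<in> T"
          show "HH e a k j = -1/2 * dl l j"
            using that j aT by (cases "j = l"; cases "k = j") (auto simp: HH_def ind_def dl_def doubleton_eq_iff)
        qed
        also have "\<dots> = -1/2 * (- 2 * ?L / (?m + 1))"
          unfolding Lam_cmult using Lam_g0(2)[OF finT that(1) that(2)] that by simp
        finally show ?thesis by simp
      qed
      have Z: "Lam T g0 k (HH e a k) = 0" if "k \<in> T - {u,v}" for k
      proof -
        have "Lam T g0 k (HH e a k) = Lam T g0 k (\<lambda>_. 0)"
        proof (rule Lam_cong)
          show "k \<in> T" using that by simp
          fix j assume j: "j \<in> T"
          show "HH e a k j = 0"
            using that j aT e2 uT vT by (auto simp: HH_def ind_def doubleton_eq_iff)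
        qed
        thus ?thesis by (simp add: Lam_zero)
      qed
      have "(\<Sum>k\<in>T. Lam T g0 k (HH e a k)) = Lam T g0 u (HH e a u) + (\<Sum>k\<in>T-{u}. Lam T g0 k (HH e a k))"
        by (rule sum.remove[OF finT uT])
      also have "(\<Sum>k\<in>T-{u}. Lam T g0 k (HH e a k)) = Lam T g0 v (HH e a v) + (\<Sum>k\<in>T-{u}-{v}. Lam T g0 k (HH e a k))"
        using finT vT e2 by (intro sum.remove) auto
      also have "(\<Sum>k\<in>T-{u}-{v}. Lam T g0 k (HH e a k)) = 0"
        using Z by (intro sum.neutral) auto
      also have "Lam T g0 u (HH e a u) = ?L / (?m + 1)" using L[OF uT vT e2(2) e2(1)] .
      also have "Lam T g0 v (HH e a v) = ?L / (?m + 1)" using L[OF vT uT _ ] e2 by (simp add: insert_commute)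
      finally show ?thesis using \<open>e \<subseteq> S\<close> by simp
    qed
  qed
qed



definition D0 :: "nat \<Rightarrow> real" where "D0 m = (real m + 1) / 2 ^ m"
definition cc :: "nat \<Rightarrow> real" where "cc m = (2 * D0 m / (real m + 1)) / (sqrt (D0 m) * fact m)"

lemma D0_pos: "D0 m > 0" by (simp add: D0_def)
lemma cc_nz: "cc m \<noteq> 0" using D0_pos[of m] by (simp add: cc_def)

lemma face_deriv:
  fixes S e :: "nat set"
  assumes n: "CARD('n::finite) \<ge> 3" and S: "S \<in> simplex_faces CARD('n)" and e: "e \<in> simplex_edges CARD('n)"
    and real: "\<And>t. \<bar>t\<bar> < 1/4 \<Longrightarrow> \<exists>x::nat \<Rightarrow> real^'n. is_simplex x \<and> edge_lengths x = Et CARD('n) e t"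
  shows "((\<lambda>t. face_volumes_of_edges TYPE('n) (Et CARD('n) e t) S) has_real_derivative
           cc (CARD('n) - 2) * incidence S e) (at 0)"
proof -
  let ?n = "CARD('n)"
  define a where "a = Min S"
  define T where "T = S - {Min S}"
  define m where "m = ?n - 2"
  have Ssub: "S \<subseteq> {1..?n+1}" and cS: "card S = ?n - 1" using S by (auto simp: simplex_faces_def)
  have finS: "finite S" using Ssub finite_subset by blast
  have Sne: "S \<noteq> {}" using cS n by auto
  have aS: "a \<in> S" unfolding a_def using Min_in[OF finS Sne] .
  have finT: "finite T" unfolding T_def using finS by simp
  have cT: "card T = m" unfolding T_def m_def using cS finS Sne Min_in by (simp add: card_Diff_singleton)
  have cS1: "card S - 1 = m" using cS unfolding m_def by simp
  define L where "L t = LD T (\<lambda>i j. g0 i j + (2*t + t^2) * HH e a i j)" for t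
  have eqv: "face_volumes_of_edges TYPE('n) (Et ?n e t) S = sqrt (L t) / fact m" if t: "\<bar>t\<bar> < 1/4" for t
  proof -
    have "face_volumes_of_edges TYPE('n) (Et ?n e t) S = sqrt (LD T (gg (Et ?n e t) a)) / fact m"
      using fve[OF real[OF t] Ssub Sne] cS1 unfolding T_def a_def by simp
    also have "LD T (gg (Et ?n e t) a) = L t"
      unfolding L_def
    proof (rule LD_cong)
      fix i j assume "i \<in> T" "j \<in> T"
      thus "gg (Et ?n e t) a i j = g0 i j + (2*t + t^2) * HH e a i j"
        using aS Ssub unfolding T_def a_def by (intro gg_Et) auto
    qed
    finally show ?thesis .
  qed
  have ev: "eventually (\<lambda>t. face_volumes_of_edges TYPE('n) (Et ?n e t) S = sqrt (L t) / fact m) (nhds 0)"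
  proof -
    have "eventually (\<lambda>t::real. t \<in> ball 0 (1/4)) (nhds 0)"
      by (rule eventually_nhds_in_open) auto
    thus ?thesis by eventually_elim (auto intro: eqv)
  qed
  have phi: "((\<lambda>t::real. 2*t + t^2) has_real_derivative 2) (at 0)"
    by (auto intro!: derivative_eq_intros)
  have dL: "(L has_real_derivative (2 * (if e \<subseteq> S then 2 * D0 m / (real m + 1) else 0))) (at 0)"
  proof -
    have "(L has_real_derivative (2 * (\<Sum>k\<in>T. Lam T g0 k (HH e a k)))) (at 0)"
      unfolding L_def by (rule LD_deriv[OF finT phi]) simp
    moreover have "(\<Sum>k\<in>T. Lam T g0 k (HH e a k)) = (if e \<subseteq> S then 2 * D0 m / (real m + 1) else 0)"
      using sum_HH[OF S n e] LD_g0[OF finT cT] cT unfolding T_def a_def D0_def by simp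
    ultimately show ?thesis by simp
  qed
  have L0: "L 0 = D0 m"
    unfolding L_def using LD_g0[OF finT cT] by (simp add: D0_def)
  have ds: "((\<lambda>t. sqrt (L t)) has_real_derivative
      (inverse (sqrt (L 0)) / 2 * (2 * (if e \<subseteq> S then 2 * D0 m / (real m + 1) else 0)))) (at 0)"
    by (rule DERIV_chain2[OF DERIV_real_sqrt dL]) (simp add: L0 D0_pos)
  have "((\<lambda>t. sqrt (L t) / fact m) has_real_derivative
      (inverse (sqrt (L 0)) / 2 * (2 * (if e \<subseteq> S then 2 * D0 m / (real m + 1) else 0))) / fact m) (at 0)"
    by (rule DERIV_cdivide[OF ds])
  moreover have "(inverse (sqrt (L 0)) / 2 * (2 * (if e \<subseteq> S then 2 * D0 m / (real m + 1) else 0))) / fact m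
     = cc (?n - 2) * incidence S e"
    unfolding L0 cc_def m_def incidence_def by (simp add: field_simps)
  ultimately show ?thesis
    by (subst DERIV_cong_ev[OF refl ev refl]) simp
qed



lemma dist_vec_sq:
  fixes u v :: "real^'n::finite"
  shows "dist u v = sqrt (\<Sum>c\<in>UNIV. (u$c - v$c)^2)"
  unfolding dist_vec_def L2_set_def dist_real_def by simp

lemma sum_delta_const:
  fixes K :: real
  shows "(\<Sum>c\<in>(UNIV::'n::finite set). (if c = c1 then K else 0)) = K"
  by simp

context
  fixes p q :: nat and c0 :: "'n::finite" and h :: "nat \<Rightarrow> 'n" and s w \<delta> \<beta> :: real
  assumes pq: "p \<noteq> q"
    and hb: "bij_betw h ({1..CARD('n)+1} - {p,q}) (UNIV - {c0})"
begin

definition xx :: "nat \<Rightarrow> real^'n" where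
  "xx i = (if i = p then (\<chi> c. if c = c0 then \<beta> else \<delta>)
           else if i = q then (\<chi> c. if c = c0 then - \<beta> else \<delta>)
           else (\<chi> c. if c = h i then w else 0))"

lemma h_ne: "i \<in> {1..CARD('n)+1} - {p,q} \<Longrightarrow> h i \<noteq> c0"
  using hb unfolding bij_betw_def by auto

lemma h_inj: "i \<in> {1..CARD('n)+1} - {p,q} \<Longrightarrow> j \<in> {1..CARD('n)+1} - {p,q} \<Longrightarrow> i \<noteq> j \<Longrightarrow> h i \<noteq> h j"
  using hb unfolding bij_betw_def inj_on_def by blast

lemma dist_OO:
  assumes "i \<in> {1..CARD('n)+1} - {p,q}" "j \<in> {1..CARD('n)+1} - {p,q}" "i \<noteq> j"
  shows "dist (xx i) (xx j) = sqrt (2 * w^2)"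
proof -
  have hij: "h i \<noteq> h j" using h_inj assms by blast
  have "(\<Sum>c\<in>UNIV. (xx i $ c - xx j $ c)^2) = (\<Sum>c\<in>UNIV. (if c = h i then w^2 else 0) + (if c = h j then w^2 else 0))"
    using assms hij by (intro sum.cong refl) (auto simp: xx_def)
  also have "\<dots> = 2 * w^2" by (simp add: sum.distrib)
  finally show ?thesis by (simp add: dist_vec_sq)
qed

lemma dist_pO:
  assumes i: "i \<in> {1..CARD('n)+1} - {p,q}" and r: "r = p \<or> r = q"
  shows "dist (xx r) (xx i) = sqrt (real CARD('n) * \<delta>^2 + (\<beta>^2 - \<delta>^2) + ((\<delta> - w)^2 - \<delta>^2))"
proof -
  have hi: "h i \<noteq> c0" using h_ne i by blast
  have "(\<Sum>c\<in>UNIV. (xx r $ c - xx i $ c)^2) =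
        (\<Sum>c\<in>UNIV. \<delta>^2 + ((if c = c0 then \<beta>^2 - \<delta>^2 else 0) + (if c = h i then (\<delta> - w)^2 - \<delta>^2 else 0)))"
    using i r hi pq by (intro sum.cong refl) (auto simp: xx_def power2_eq_square)
  also have "\<dots> = real CARD('n) * \<delta>^2 + (\<beta>^2 - \<delta>^2) + ((\<delta> - w)^2 - \<delta>^2)"
    by (simp add: sum.distrib)
  finally show ?thesis by (simp add: dist_vec_sq)
qed

lemma dist_pq: "dist (xx p) (xx q) = sqrt ((2*\<beta>)^2)"
proof -
  have "(\<Sum>c\<in>UNIV. (xx p $ c - xx q $ c)^2) = (\<Sum>c\<in>UNIV. (if c = c0 then (2*\<beta>)^2 else 0))"
    using pq by (intro sum.cong refl) (auto simp: xx_def)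
  also have "\<dots> = (2*\<beta>)^2" by simp
  finally show ?thesis by (simp add: dist_vec_sq)
qed


lemma xx_simplex:
  assumes n3: "CARD('n) \<ge> 3" and pR: "p \<in> {1..CARD('n)+1}" and qR: "q \<in> {1..CARD('n)+1}"
    and bpos: "\<beta> > 0" and wpos: "w > 0" and wd: "w \<noteq> real (CARD('n) - 1) * \<delta>"
    and inj: "inj_on xx {1..CARD('n)+1}"
  shows "is_simplex xx"
proof -
  let ?R = "{1..CARD('n)+1}" let ?O = "{1..CARD('n)+1} - {p,q}"
  define U :: "real^'n" where "U = (\<chi> c. if c = c0 then 0 else 1)"
  define B where "B = (\<lambda>y. - xx q + y) ` xx ` (?R - {q})"
  have inB: "- xx q + xx i \<in> B" if "i \<in> ?R" "i \<noteq> q" for i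
    unfolding B_def using that by blast
  have e0: "axis c0 1 = (1 / (2*\<beta>)) *\<^sub>R (- xx q + xx p)"
    using pq bpos by (simp add: vec_eq_iff xx_def axis_def)
  have s0: "axis c0 1 \<in> span B"
    unfolding e0 by (intro span_mul span_base inB pR) (use pq in auto)
  have vi: "w *\<^sub>R axis (h i) 1 - \<delta> *\<^sub>R U = - xx q + xx i - \<beta> *\<^sub>R axis c0 1" if i: "i \<in> ?O" for i
  proof -
    have "h i \<noteq> c0" using h_ne i by blast
    thus ?thesis using i pq by (auto simp: vec_eq_iff xx_def axis_def U_def)
  qed
  have sv: "w *\<^sub>R axis (h i) 1 - \<delta> *\<^sub>R U \<in> span B" if i: "i \<in> ?O" for i
    unfolding vi[OF i] using i by (intro span_diff span_mul s0 span_base inB) auto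
  have sumU: "(\<Sum>i\<in>?O. axis (h i) 1) = U"
  proof -
    have "(\<Sum>i\<in>?O. axis (h i) 1) = (\<Sum>c\<in>UNIV - {c0}. axis c (1::real))"
      using sum.reindex[of h ?O "\<lambda>c. axis c (1::real)"] hb unfolding bij_betw_def by simp
    also have "\<dots> = U"
      by (simp add: vec_eq_iff U_def axis_def)
    finally show ?thesis .
  qed
  have cO: "card ?O = CARD('n) - 1" using pR qR pq by (simp add: card_Diff_subset)
  have "(\<Sum>i\<in>?O. w *\<^sub>R axis (h i) 1 - \<delta> *\<^sub>R U) = (w - real (CARD('n) - 1) * \<delta>) *\<^sub>R U"
  proof -
    have "(\<Sum>i\<in>?O. w *\<^sub>R axis (h i) 1 - \<delta> *\<^sub>R U) = w *\<^sub>R (\<Sum>i\<in>?O. axis (h i) 1) - (\<Sum>i\<in>?O. \<delta> *\<^sub>R U)"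
      by (simp only: sum_subtractf scaleR_sum_right)
    also have "\<dots> = w *\<^sub>R U - real (card ?O) *\<^sub>R (\<delta> *\<^sub>R U)"
      by (simp only: sumU sum_constant_scaleR)
    also have "\<dots> = (w - real (CARD('n) - 1) * \<delta>) *\<^sub>R U"
      by (simp only: cO scaleR_scaleR scaleR_diff_left)
    finally show ?thesis .
  qed
  moreover have "(\<Sum>i\<in>?O. w *\<^sub>R axis (h i) 1 - \<delta> *\<^sub>R U) \<in> span B"
    by (intro span_sum sv)
  ultimately have "(w - real (CARD('n) - 1) * \<delta>) *\<^sub>R U \<in> span B" by simp
  hence sU: "U \<in> span B"
    using span_mul[of "(w - real (CARD('n) - 1) * \<delta>) *\<^sub>R U" B "1 / (w - real (CARD('n) - 1) * \<delta>)"] wd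
    by simp
  have sc: "axis c 1 \<in> span B" for c
  proof (cases "c = c0")
    case True thus ?thesis using s0 by simp
  next
    case False
    hence "c \<in> h ` ?O" using bij_betw_imp_surj_on[OF hb] by simp
    then obtain i where i: "i \<in> ?O" "h i = c" by (auto simp del: atLeastAtMost_iff)
    have "axis c 1 = (1/w) *\<^sub>R ((w *\<^sub>R axis (h i) 1 - \<delta> *\<^sub>R U) + \<delta> *\<^sub>R U)"
      using wpos i by simp
    thus ?thesis by (simp only:) (intro span_mul span_add sv[OF i(1)] sU)
  qed
  have spanU: "v \<in> span B" for v :: "real^'n"
  proof -
    have "v = (\<Sum>c\<in>UNIV. (v$c) *\<^sub>R axis c 1)"
      using basis_expansion[of v] by (simp add: scalar_mult_eq_scaleR)
    also have "\<dots> \<in> span B" by (intro span_sum span_mul sc)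
    finally show ?thesis .
  qed
  have finB: "finite B" unfolding B_def by simp
  have cB: "card B \<le> CARD('n)"
  proof -
    have "card B \<le> card (xx ` (?R - {q}))" unfolding B_def by (rule card_image_le) simp
    also have "\<dots> \<le> card (?R - {q})" by (rule card_image_le) simp
    also have "\<dots> = CARD('n)" using qR by simp
    finally show ?thesis .
  qed
  have indep: "independent B"
  proof (rule card_le_dim_spanning[of B UNIV])
    show "B \<subseteq> UNIV" by simp
    show "UNIV \<subseteq> span B" using spanU by blast
    show "finite B" by (rule finB)
    show "card B \<le> dim (UNIV :: (real^'n) set)" using cB by (simp add: dim_UNIV)
  qed
  have img: "xx ` ?R = insert (xx q) (xx ` (?R - {q}))" using qR by auto
  have notin: "xx q \<notin> xx ` (?R - {q})" using inj qR unfolding inj_on_def by blast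
  have "\<not> affine_dependent (xx ` ?R)"
    unfolding img affine_dependent_iff_dependent[OF notin] using indep unfolding B_def by simp
  thus ?thesis unfolding is_simplex_def using inj by simp
qed
end



context
  fixes p q :: nat and c0 :: "'n::finite" and h :: "nat \<Rightarrow> 'n" and s w \<delta> \<beta> :: real
  assumes pq: "p \<noteq> q"
    and hb: "bij_betw h ({1..CARD('n)+1} - {p,q}) (UNIV - {c0})"
begin

lemma xx_realize:
  assumes n3: "CARD('n) \<ge> 3" and pR: "p \<in> {1..CARD('n)+1}" and qR: "q \<in> {1..CARD('n)+1}"
    and bpos: "\<beta> > 0" and wpos: "w > 0" and wd: "w \<noteq> real (CARD('n) - 1) * \<delta>"
    and h1: "real CARD('n) * \<delta>^2 + (\<beta>^2 - \<delta>^2) + ((\<delta> - w)^2 - \<delta>^2) = 1"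
    and h2: "2 * w^2 = 1" and h3: "2 * \<beta> = 1 + t"
  shows "is_simplex (xx p q c0 h w \<delta> \<beta>) \<and> edge_lengths (xx p q c0 h w \<delta> \<beta>) = Et CARD('n) {p,q} t"
proof -
  let ?x = "xx p q c0 h w \<delta> \<beta>"
  let ?R = "{1..CARD('n)+1}"
  have D: "dist (?x u) (?x v) = (if {u,v} = {p,q} then 1 + t else 1)"
    if u: "u \<in> ?R" and v: "v \<in> ?R" and uv: "u \<noteq> v" for u v
  proof (cases "u \<in> {p,q}")
    case True
    note uu = True
    show ?thesis
    proof (cases "v \<in> {p,q}")
      case True
      hence e: "{u,v} = {p,q}" using uu uv by auto
      have "sqrt ((2*\<beta>)^2) = 2 * \<beta>" using bpos by (subst real_sqrt_abs) simp
      hence "dist (?x p) (?x q) = 1 + t"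
        using dist_pq[OF pq hb, of w \<delta> \<beta>] h3 by (simp only:)
      hence "dist (?x u) (?x v) = 1 + t" using uu True uv by (auto simp: dist_commute)
      thus ?thesis using e by simp
    next
      case False
      hence e: "{u,v} \<noteq> {p,q}" using uu by (auto simp: doubleton_eq_iff)
      have "dist (?x u) (?x v) = 1"
        using dist_pO[OF pq hb, of v u] False v uu h1 by simp
      thus ?thesis using e by simp
    qed
  next
    case False
    note uu = False
    show ?thesis
    proof (cases "v \<in> {p,q}")
      case True
      hence e: "{u,v} \<noteq> {p,q}" using uu by (auto simp: doubleton_eq_iff)
      have "dist (?x v) (?x u) = 1"
        using dist_pO[OF pq hb, of u v] True u uu h1 by simp
      thus ?thesis using e by (simp add: dist_commute)
    next
      case False
      hence e: "{u,v} \<noteq> {p,q}" using uu by (auto simp: doubleton_eq_iff)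
      have "dist (?x u) (?x v) = 1"
        using dist_OO[OF pq hb, of u v] False u v uu uv h2 by simp
      thus ?thesis using e by simp
    qed
  qed
  have inj: "inj_on ?x ?R"
  proof (rule inj_onI, rule ccontr)
    fix u v assume "u \<in> ?R" "v \<in> ?R" "?x u = ?x v" "u \<noteq> v"
    thus False using D[of u v] bpos h3 by (auto split: if_splits)
  qed
  have EL: "edge_lengths ?x = Et CARD('n) {p,q} t"
  proof
    fix f
    show "edge_lengths ?x f = Et CARD('n) {p,q} t f"
    proof (cases "f \<in> simplex_edges CARD('n)")
      case True
      then obtain u v where f: "f = {u,v}" "u \<noteq> v" "u \<in> ?R" "v \<in> ?R"
        by (auto simp: simplex_edges_def card_2_iff)
      show ?thesis
        unfolding f(1) el_pair[OF f(2-4)] Et_pair[OF f(2-4)] D[OF f(3,4,2)]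
        by (simp add: ind_def)
    next
      case False
      have "{p,q} \<in> simplex_edges CARD('n)" using pR qR pq by (auto simp: simplex_edges_def)
      hence "f \<noteq> {p,q}" using False by auto
      thus ?thesis using False by (simp add: edge_lengths_def Et_def regular_edges_def edge_unit_def)
    qed
  qed
  show ?thesis using xx_simplex[OF pq hb n3 pR qR bpos wpos wd inj] EL by simp
qed

end



lemma realize:
  assumes n3: "CARD('n::finite) \<ge> 3" and e: "e \<in> simplex_edges CARD('n)" and t: "\<bar>t\<bar> < 1/4"
  shows "\<exists>x::nat \<Rightarrow> real^'n. is_simplex x \<and> edge_lengths x = Et CARD('n) e t"
proof -
  let ?n = "CARD('n)"
  let ?R = "{1..?n+1}"
  obtain p q where pq: "e = {p,q}" "p \<noteq> q" and pR: "p \<in> ?R" and qR: "q \<in> ?R"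
    using e by (auto simp: simplex_edges_def card_2_iff)
  define c0 :: 'n where "c0 = undefined"
  have c1: "card (?R - {p,q}) = ?n - 1" using pR qR pq by (simp add: card_Diff_subset)
  have c2: "card (UNIV - {c0}) = ?n - 1" by (simp add: card_Diff_subset)
  obtain h where hb: "bij_betw h (?R - {p,q}) (UNIV - {c0})"
    using finite_same_card_bij[of "?R - {p,q}" "UNIV - {c0}"] c1 c2 by auto
  define s where "s = 1 + t"
  define N where "N = real ?n - 1"
  have N: "N \<ge> 2" using n3 unfolding N_def by simp
  have rn1: "real (?n - 1) = N" using n3 unfolding N_def by (simp add: of_nat_diff)
  define \<beta> where "\<beta> = s / 2"
  define w where "w = sqrt 2 / 2"
  define Dd where "Dd = sqrt (2 * (N + 1) - N * s^2)"
  define \<delta> where "\<delta> = (2 * w + Dd) / (2 * N)"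
  have s: "s > 3/4" "s < 5/4" using t unfolding s_def by auto
  have s2: "s^2 < 2"
  proof -
    have "s^2 < (5/4)^2" using s by (intro power_strict_mono) auto
    also have "(5/4::real)^2 < 2" by (simp add: power2_eq_square)
    finally show ?thesis .
  qed
  have rad: "2 * (N + 1) - N * s^2 > 0"
  proof -
    have "N * s^2 \<le> N * 2" using s2 N by (intro mult_left_mono) auto
    thus ?thesis by simp
  qed
  have Dpos: "Dd > 0" unfolding Dd_def using rad by simp
  have Dsq: "Dd^2 = 2 * (N + 1) - N * s^2" unfolding Dd_def using rad by simp
  have w2: "w^2 = 1/2" unfolding w_def by (simp add: power_divide)
  have wpos: "w > 0" unfolding w_def by simp
  have bpos: "\<beta> > 0" using s unfolding \<beta>_def by simp
  have wd: "w \<noteq> real (?n - 1) * \<delta>"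
  proof
    assume "w = real (?n - 1) * \<delta>"
    hence "w = (2 * w + Dd) / 2" unfolding rn1 \<delta>_def using N by simp
    thus False using Dpos by simp
  qed
  have key: "N * \<delta>^2 - 2 * w * \<delta> = 1/2 - \<beta>^2"
  proof -
    have "N * \<delta>^2 - 2 * w * \<delta> = \<delta> * (N * \<delta> - 2 * w)" by (simp add: power2_eq_square algebra_simps)
    also have "N * \<delta> = (2 * w + Dd) / 2" unfolding \<delta>_def using N by simp
    also have "\<delta> * ((2 * w + Dd) / 2 - 2 * w) = (Dd^2 - 4 * w^2) / (4 * N)"
      unfolding \<delta>_def using N by (simp add: field_simps power2_eq_square)
    also have "\<dots> = (2 * N - N * s^2) / (4 * N)" unfolding Dsq w2 by simp
    also have "\<dots> = 1/2 - \<beta>^2" unfolding \<beta>_def using N by (simp add: field_simps power2_eq_square)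
    finally show ?thesis .
  qed
  have h1: "real ?n * \<delta>^2 + (\<beta>^2 - \<delta>^2) + ((\<delta> - w)^2 - \<delta>^2) = 1"
  proof -
    have "real ?n = N + 1" unfolding N_def by simp
    hence "real ?n * \<delta>^2 + (\<beta>^2 - \<delta>^2) + ((\<delta> - w)^2 - \<delta>^2) = (N * \<delta>^2 - 2 * w * \<delta>) + w^2 + \<beta>^2"
      by (simp add: power2_eq_square algebra_simps)
    thus ?thesis using key w2 by simp
  qed
  have h2: "2 * w^2 = 1" using w2 by simp
  have h3: "2 * \<beta> = 1 + t" unfolding \<beta>_def s_def by simp
  show ?thesis
    using xx_realize[OF pq(2) hb n3 pR qR bpos wpos wd h1 h2 h3] pq(1) by blast
qed

theorem mainTheorem2:
  assumes "CARD('n::finite) \<ge> 3"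
  shows "\<exists>c::real. c \<noteq> 0 \<and>
    (\<forall>S\<in>simplex_faces CARD('n). \<forall>e\<in>simplex_edges CARD('n).
       ((\<lambda>t. face_volumes_of_edges TYPE('n)
               (\<lambda>e'. regular_edges CARD('n) e' + t * edge_unit e e') S)
          has_real_derivative c * incidence S e) (at 0))"
proof (intro exI conjI ballI)
  show "cc (CARD('n) - 2) \<noteq> 0" by (rule cc_nz)
  fix S e assume S: "S \<in> simplex_faces CARD('n)" and e: "e \<in> simplex_edges CARD('n)"
  show "((\<lambda>t. face_volumes_of_edges TYPE('n)
               (\<lambda>e'. regular_edges CARD('n) e' + t * edge_unit e e') S)
          has_real_derivative cc (CARD('n) - 2) * incidence S e) (at 0)"
    using face_deriv[OF assms S e realize[OF assms e]] unfolding Et_def by simp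
qed


end
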